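(* Let $A$ be a finite alphabet, $b\in A$ a letter, and $u$ a word over $A$ not ending with $b$. If $\vdash^*_{\{u\}}$ is not a well quasi-order on $L^{\epsilon}_{\vdash_{\{u\}}}$, then for every $k\ge1$, $\vdash^*_{\{ub^k\}}$ is not a well quasi-order on $L^{\epsilon}_{\vdash_{\{ub^k\}}}$. Symmetrically (Lemma 9), if $u$ does not begin with $b$ and $\vdash^*_{\{u\}}$ is not a wqo on $L^{\epsilon}_{\vdash_{\{u\}}}$, then for every $k\ge1$, $\vdash^*_{\{b^ku\}}$ is not a wqo on $L^{\epsilon}_{\vdash_{\{b^ku\}}}$.
   Context: For words $u,v$, the shuffle $u \sqcup\!\sqcup v$ is the set of all words $u_1v_1\cdots u_kv_k$ with $k\ge 1$, $u=u_1\cdots u_k$, $v=v_1\cdots v_k$ (pieces possibly empty). For a finite set $I$ of words, $v \vdash_I w$ means $w \in v \sqcup\!\sqcup u$ for some $u\in I$; $\vdash_I^*$ is its reflexive-transitive closure and $L^{\epsilon}_{\vdash_I}=\{w : \epsilon \vdash_I^* w\}$. A quasi-order $\le$ on $S$ is a well quasi-order iff every infinite sequence $s_1,s_2,\dots$ in $S$ has $i<j$ with $s_i\le s_j$. *)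

theory Defs
  imports Main
begin

definition shuffle_step :: "'a list set \<Rightarrow> 'a list \<Rightarrow> 'a list \<Rightarrow> bool" where
  "shuffle_step I v w \<longleftrightarrow> (\<exists>u\<in>I. w \<in> shuffles v u)"

definition shuffle_deriv :: "'a list set \<Rightarrow> 'a list \<Rightarrow> 'a list \<Rightarrow> bool" where
  "shuffle_deriv I = (shuffle_step I)\<^sup>*\<^sup>*"

definition shuffle_lang :: "'a list set \<Rightarrow> 'a list set" where
  "shuffle_lang I = {w. shuffle_deriv I [] w}"

definition wqo_on_set :: "('b \<Rightarrow> 'b \<Rightarrow> bool) \<Rightarrow> 'b set \<Rightarrow> bool" where
  "wqo_on_set le S \<longleftrightarrow>
     (\<forall>x\<in>S. le x x) \<and>
     (\<forall>x\<in>S. \<forall>y\<in>S. \<forall>z\<in>S. le x y \<longrightarrow> le y z \<longrightarrow> le x z) \<and>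
     (\<forall>f::nat \<Rightarrow> 'b. (\<forall>i. f i \<in> S) \<longrightarrow> (\<exists>i j. i < j \<and> le (f i) (f j)))"

end

theory Submission
  imports Defs
begin

lemma app_shuffles:
  "a \<in> shuffles x u \<Longrightarrow> c \<in> shuffles d e \<Longrightarrow> a @ c \<in> shuffles (x @ d) (u @ e)"
proof (induction a arbitrary: x u)
  case Nil then show ?case by simp
next
  case (Cons z a)
  from Cons.prems(1) show ?case
    unfolding Cons_in_shuffles_iff
  proof (elim disjE conjE)
    assume "x \<noteq> []" "hd x = z" "a \<in> shuffles (tl x) u"
    then show ?thesis using Cons.IH[of "tl x" u] Cons.prems(2)
      by (cases x) (auto simp: Cons_in_shuffles_iff)
  next
    assume "u \<noteq> []" "hd u = z" "a \<in> shuffles x (tl u)"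
    then show ?thesis using Cons.IH[of x "tl u"] Cons.prems(2)
      by (cases u) (auto simp: Cons_in_shuffles_iff)
  qed
qed

lemma rev_shuffles:
  "y \<in> shuffles x u \<Longrightarrow> rev y \<in> shuffles (rev x) (rev u)"
proof (induction y arbitrary: x u)
  case Nil then show ?case by simp
next
  case (Cons z y)
  from Cons.prems(1) show ?case
    unfolding Cons_in_shuffles_iff
  proof (elim disjE conjE)
    assume "x \<noteq> []" "hd x = z" "y \<in> shuffles (tl x) u"
    then show ?thesis using Cons.IH[of "tl x" u] app_shuffles[of "rev y" "rev (tl x)" "rev u" "[z]" "[z]" "[]"]
      by (cases x) auto
  next
    assume "u \<noteq> []" "hd u = z" "y \<in> shuffles x (tl u)"
    then show ?thesis using Cons.IH[of x "tl u"] app_shuffles[of "rev y" "rev x" "rev (tl u)" "[z]" "[]" "[z]"]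
      by (cases u) auto
  qed
qed

lemma split_shuffles:
  "y1 @ y2 \<in> shuffles t z \<Longrightarrow> \<exists>t1 t2 z1 z2. t = t1 @ t2 \<and> z = z1 @ z2 \<and>
     y1 \<in> shuffles t1 z1 \<and> y2 \<in> shuffles t2 z2"
proof (induction y1 arbitrary: t z)
  case Nil then show ?case by (metis append_Nil Nil_in_shufflesI)
next
  case (Cons a y1)
  have "(t \<noteq> [] \<and> hd t = a \<and> y1 @ y2 \<in> shuffles (tl t) z) \<or>
        (z \<noteq> [] \<and> hd z = a \<and> y1 @ y2 \<in> shuffles t (tl z))"
    using Cons.prems(1) unfolding append_Cons Cons_in_shuffles_iff .
  then show ?case
  proof (elim disjE conjE)
    assume "t \<noteq> []" "hd t = a" "y1 @ y2 \<in> shuffles (tl t) z"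
    then obtain t1 t2 z1 z2 where "tl t = t1 @ t2" "z = z1 @ z2" "y1 \<in> shuffles t1 z1" "y2 \<in> shuffles t2 z2"
      using Cons.IH by blast
    moreover have "t = (a # t1) @ t2" using \<open>t \<noteq> []\<close> \<open>hd t = a\<close> \<open>tl t = t1 @ t2\<close>
      by (cases t) auto
    moreover have "a # y1 \<in> shuffles (a # t1) z1" using \<open>y1 \<in> shuffles t1 z1\<close>
      by (rule Cons_in_shuffles_leftI)
    ultimately show ?thesis by blast
  next
    assume "z \<noteq> []" "hd z = a" "y1 @ y2 \<in> shuffles t (tl z)"
    then obtain t1 t2 z1 z2 where "t = t1 @ t2" "tl z = z1 @ z2" "y1 \<in> shuffles t1 z1" "y2 \<in> shuffles t2 z2"
      using Cons.IH by blast
    moreover have "z = (a # z1) @ z2" using \<open>z \<noteq> []\<close> \<open>hd z = a\<close> \<open>tl z = z1 @ z2\<close>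
      by (cases z) auto
    moreover have "a # y1 \<in> shuffles t1 (a # z1)" using \<open>y1 \<in> shuffles t1 z1\<close>
      by (rule Cons_in_shuffles_rightI)
    ultimately show ?thesis by blast
  qed
qed


lemma shuffles_Nil2[simp]: "shuffles xs [] = {xs}"
  by (cases xs) auto

definition trail :: "'a \<Rightarrow> 'a list \<Rightarrow> nat" where
  "trail b xs = length (takeWhile (\<lambda>x. x = b) (rev xs))"

lemma all_b_rep: "set xs \<subseteq> {b} \<Longrightarrow> xs = replicate (length xs) b"
  by (metis replicate_eqI singletonD subsetD)

lemma trail_app_ge: "set x2 \<subseteq> {b} \<Longrightarrow> length x2 \<le> trail b (x1 @ x2)"
proof -
  assume "set x2 \<subseteq> {b}"
  then have e: "x2 = replicate (length x2) b" by (rule all_b_rep)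
  have t: "takeWhile (\<lambda>x. x = b) (replicate n b @ ys) = replicate n b @ takeWhile (\<lambda>x. x = b) ys" for n ys
    by (induction n) auto
  have "takeWhile (\<lambda>x. x = b) (rev (x1 @ x2)) = rev x2 @ takeWhile (\<lambda>x. x = b) (rev x1)"
    by (subst (1 2) e, simp add: t)
  then show ?thesis unfolding trail_def by simp
qed

lemma trail_split: "\<exists>y1. y = y1 @ replicate (trail b y) b"
proof -
  let ?P = "\<lambda>x. x = b"
  have "rev y = takeWhile ?P (rev y) @ dropWhile ?P (rev y)" by simp
  then have "y = rev (dropWhile ?P (rev y)) @ rev (takeWhile ?P (rev y))"
    by (metis rev_append rev_rev_ident)
  moreover have "set (takeWhile ?P (rev y)) \<subseteq> {b}"
    by (auto dest: set_takeWhileD)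
  then have "rev (takeWhile ?P (rev y)) = replicate (trail b y) b"
    unfolding trail_def by (metis all_b_rep rev_replicate)
  ultimately show ?thesis by metis
qed

lemma ZS:
  assumes "u \<noteq> []" "last u \<noteq> b" "u @ replicate k b = z1 @ z2" "set z2 \<subseteq> {b}"
  shows "\<exists>j. j \<le> k \<and> z2 = replicate j b \<and> z1 = u @ replicate (k - j) b"
proof -
  from assms(3) obtain us where
    c: "(u = z1 @ us \<and> us @ replicate k b = z2) \<or> (u @ us = z1 \<and> replicate k b = us @ z2)"
    by (auto simp: append_eq_append_conv2)
  then show ?thesis
  proof
    assume h: "u = z1 @ us \<and> us @ replicate k b = z2"
    have "us = []"
    proof (rule ccontr)
      assume "us \<noteq> []"
      then have "last u = last us" using h by simp
      moreover have "last us \<in> set z2" using h \<open>us \<noteq> []\<close> by auto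
      ultimately show False using assms(2,4) by auto
    qed
    then show ?thesis using h by auto
  next
    assume h: "u @ us = z1 \<and> replicate k b = us @ z2"
    then have "set us \<subseteq> set (replicate k b)" by simp
    also have "\<dots> \<subseteq> {b}" by auto
    finally have "set us \<subseteq> {b}" .
    then have "us = replicate (length us) b" by (rule all_b_rep)
    moreover have "z2 = replicate (length z2) b" using assms(4) by (rule all_b_rep)
    moreover have "length us + length z2 = k" using h by (metis length_append length_replicate)
    ultimately show ?thesis using h by (intro exI[of _ "length z2"]) auto
  qed
qed

lemma F2:
  assumes "u \<noteq> []" "last u \<noteq> b" "shuffle_step {u @ replicate k b} x y"
  shows "trail b y \<le> trail b x + k"
proof -
  have y: "y \<in> shuffles x (u @ replicate k b)" using assms(3) unfolding shuffle_step_def by auto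
  define m where "m = trail b y"
  have "\<exists>y1. y = y1 @ replicate m b" unfolding m_def by (rule trail_split)
  then obtain y1 where "y = y1 @ replicate m b" by (elim exE)
  with y have "y1 @ replicate m b \<in> shuffles x (u @ replicate k b)" by simp
  from split_shuffles[OF this] obtain x1 x2 z1 z2 where "x = x1 @ x2" "u @ replicate k b = z1 @ z2"
    "replicate m b \<in> shuffles x2 z2" by blast
  moreover have "set x2 \<subseteq> {b}" "set z2 \<subseteq> {b}"
    using set_shuffles[OF calculation(3)] by auto
  ultimately obtain j where j: "j \<le> k" "z2 = replicate j b"
    using ZS[OF assms(1,2)] by blast
  have "trail b y = length x2 + length z2"
    using length_shuffles[OF \<open>replicate m b \<in> shuffles x2 z2\<close>] m_def by simp
  moreover have "length x2 \<le> trail b x"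
    using trail_app_ge[OF \<open>set x2 \<subseteq> {b}\<close>, of x1] \<open>x = x1 @ x2\<close> by simp
  ultimately show ?thesis using j by simp
qed

lemma F3:
  assumes "u \<noteq> []" "last u \<noteq> b" "shuffle_deriv {u @ replicate k b} [] t"
  shows "trail b t * (length u + k) \<le> k * length t"
  using assms(3) unfolding shuffle_deriv_def
proof (induction rule: rtranclp_induct)
  case base then show ?case by (simp add: trail_def)
next
  case (step x y)
  have l: "length y = length x + length u + k"
    using step(2) length_shuffles unfolding shuffle_step_def by fastforce
  have "trail b y * (length u + k) \<le> (trail b x + k) * (length u + k)"
    using F2[OF assms(1,2) step(2)] by simp
  also have "\<dots> = trail b x * (length u + k) + k * (length u + k)" by (simp add: algebra_simps)
  also have "\<dots> \<le> k * length x + k * (length u + k)" using step(3) by simp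
  also have "\<dots> = k * length y" using l by (simp add: algebra_simps)
  finally show ?case .
qed

lemma deriv_back:
  assumes u: "u \<noteq> []" "last u \<noteq> b"
  and d: "shuffle_deriv {u @ replicate k b} x y"
  and x: "x \<in> shuffle_lang {u @ replicate k b}"
  and y: "y = w @ replicate (k*n) b" "length w = n * length u"
  shows "\<exists>t c. x = t @ replicate (k*c) b \<and> length t = c * length u \<and> shuffle_deriv {u} t w"
proof -
  let ?v = "u @ replicate k b"
  let ?p = "length u"
  have "x \<in> shuffle_lang {?v} \<longrightarrow>
     (\<exists>t c. x = t @ replicate (k*c) b \<and> length t = c * ?p \<and> shuffle_deriv {u} t w)"
    using d[unfolded shuffle_deriv_def]
  proof (induction rule: converse_rtranclp_induct)
    case base
    then show ?case using y unfolding shuffle_deriv_def by blast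
  next
    case (step s s2)
    show ?case
    proof
      assume sL: "s \<in> shuffle_lang {?v}"
      then have "s2 \<in> shuffle_lang {?v}" using step(1)
        unfolding shuffle_lang_def shuffle_deriv_def by auto
      with step(3) obtain t2 c where t2: "s2 = t2 @ replicate (k*c) b" "length t2 = c * ?p"
        "shuffle_deriv {u} t2 w" by blast
      have s2: "s2 \<in> shuffles s ?v" using step(1) unfolding shuffle_step_def by auto
      have "t2 @ replicate (k*c) b \<in> shuffles s ?v" using s2 t2(1) by simp
      from split_shuffles[OF this] obtain s1 s2r z1 z2 where sp: "s = s1 @ s2r" "?v = z1 @ z2"
        "t2 \<in> shuffles s1 z1" "replicate (k*c) b \<in> shuffles s2r z2"
        by blast
      have bs: "set s2r \<subseteq> {b}" "set z2 \<subseteq> {b}" using set_shuffles[OF sp(4)] by auto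
      obtain j where j: "j \<le> k" "z2 = replicate j b" "z1 = u @ replicate (k - j) b"
        using ZS[OF u sp(2) bs(2)] by blast
      have l1: "length s2r + j = k * c" using length_shuffles[OF sp(4)] j(2) by simp
      have l2: "length s2 = length s + ?p + k" using length_shuffles[OF s2] by simp
      have l3: "length s2 = c * ?p + k * c" using t2 by simp
      have "c \<noteq> 0" using l2 l3 u(1) by (cases c) auto
      then obtain c0 where c0: "c = Suc c0" by (cases c) auto
      have ls: "length s = c0 * (?p + k)" using l2 l3 c0 by (simp add: algebra_simps)
      have F: "trail b s * (?p + k) \<le> k * length s"
        using F3[OF u] sL unfolding shuffle_lang_def by blast
      also have "\<dots> = (k * c0) * (?p + k)" using ls by simp
      finally have "trail b s \<le> k * c0" using u(1) by simp
      moreover have "length s2r \<le> trail b s" using trail_app_ge[OF bs(1)] sp(1) by simp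
      ultimately have "j = k" using l1 c0 j(1) by simp
      then have z1: "z1 = u" using j by simp
      have "length s2r = k * c0" using l1 c0 \<open>j = k\<close> by simp
      then have s2r: "s2r = replicate (k * c0) b" using all_b_rep[OF bs(1)] by metis
      have "length s1 = c0 * ?p" using length_shuffles[OF sp(3)] z1 t2(2) c0 by simp
      moreover have "shuffle_step {u} s1 t2" unfolding shuffle_step_def using sp(3) z1 by blast
      then have "shuffle_deriv {u} s1 w"
        using t2(3) unfolding shuffle_deriv_def by (rule converse_rtranclp_into_rtranclp)
      ultimately show "\<exists>t c. s = t @ replicate (k*c) b \<and> length t = c * ?p \<and> shuffle_deriv {u} t w"
        using sp(1) s2r by blast
    qed
  qed
  then show ?thesis using x by blast
qed

lemma fwd:
  assumes "shuffle_deriv {u} [] w"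
  shows "\<exists>n. length w = n * length u \<and> shuffle_deriv {u @ replicate k b} [] (w @ replicate (k*n) b)"
  using assms unfolding shuffle_deriv_def
proof (induction rule: rtranclp_induct)
  case base then show ?case by (intro exI[of _ 0]) simp
next
  case (step x y)
  then obtain n where n: "length x = n * length u"
    "(shuffle_step {u @ replicate k b})\<^sup>*\<^sup>* [] (x @ replicate (k*n) b)" by blast
  have y: "y \<in> shuffles x u" using step(2) unfolding shuffle_step_def by auto
  have r: "replicate (k*n) b @ replicate k b \<in> shuffles (replicate (k*n) b) (replicate k b)"
    using app_shuffles[of "replicate (k*n) b" "replicate (k*n) b" "[]" "replicate k b" "[]" "replicate k b"]
    by simp
  have "y @ replicate (k * Suc n) b \<in> shuffles (x @ replicate (k*n) b) (u @ replicate k b)"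
    using app_shuffles[OF y r] by (simp add: replicate_add[symmetric] algebra_simps)
  then have "shuffle_step {u @ replicate k b} (x @ replicate (k*n) b) (y @ replicate (k * Suc n) b)"
    unfolding shuffle_step_def by blast
  moreover have "length y = Suc n * length u" using length_shuffles[OF y] n(1) by simp
  ultimately show ?case using n(2) by (meson rtranclp.rtrancl_into_rtrancl)
qed

definition bad :: "'a list set \<Rightarrow> (nat \<Rightarrow> 'a list) \<Rightarrow> bool" where
  "bad I f \<longleftrightarrow> (\<forall>i. f i \<in> shuffle_lang I) \<and> (\<forall>i j. i < j \<longrightarrow> \<not> shuffle_deriv I (f i) (f j))"

lemma bad_mem: "bad I f \<Longrightarrow> f i \<in> shuffle_lang I"
  by (simp add: bad_def)

lemma bad_nd: "bad I f \<Longrightarrow> i < j \<Longrightarrow> \<not> shuffle_deriv I (f i) (f j)"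
  by (simp add: bad_def)

lemma not_wqo_iff: "\<not> wqo_on_set (shuffle_deriv I) (shuffle_lang I) \<longleftrightarrow> (\<exists>f. bad I f)"
proof -
  have r: "\<forall>x\<in>shuffle_lang I. shuffle_deriv I x x" by (simp add: shuffle_deriv_def)
  have t: "\<forall>x\<in>shuffle_lang I. \<forall>y\<in>shuffle_lang I. \<forall>z\<in>shuffle_lang I.
     shuffle_deriv I x y \<longrightarrow> shuffle_deriv I y z \<longrightarrow> shuffle_deriv I x z"
    unfolding shuffle_deriv_def by (meson rtranclp_trans)
  have "wqo_on_set (shuffle_deriv I) (shuffle_lang I) \<longleftrightarrow>
     (\<forall>f::nat \<Rightarrow> 'a list. (\<forall>i. f i \<in> shuffle_lang I) \<longrightarrow> (\<exists>i j. i < j \<and> shuffle_deriv I (f i) (f j)))"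
    unfolding wqo_on_set_def
  proof (intro iffI)
    assume "(\<forall>x\<in>shuffle_lang I. shuffle_deriv I x x) \<and> (\<forall>x\<in>shuffle_lang I. \<forall>y\<in>shuffle_lang I. \<forall>z\<in>shuffle_lang I.
     shuffle_deriv I x y \<longrightarrow> shuffle_deriv I y z \<longrightarrow> shuffle_deriv I x z) \<and>
     (\<forall>f::nat \<Rightarrow> 'a list. (\<forall>i. f i \<in> shuffle_lang I) \<longrightarrow> (\<exists>i j. i < j \<and> shuffle_deriv I (f i) (f j)))"
    then show "\<forall>f::nat \<Rightarrow> 'a list. (\<forall>i. f i \<in> shuffle_lang I) \<longrightarrow> (\<exists>i j. i < j \<and> shuffle_deriv I (f i) (f j))"
      by (elim conjE)
  next
    assume "\<forall>f::nat \<Rightarrow> 'a list. (\<forall>i. f i \<in> shuffle_lang I) \<longrightarrow> (\<exists>i j. i < j \<and> shuffle_deriv I (f i) (f j))"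
    then show "(\<forall>x\<in>shuffle_lang I. shuffle_deriv I x x) \<and> (\<forall>x\<in>shuffle_lang I. \<forall>y\<in>shuffle_lang I. \<forall>z\<in>shuffle_lang I.
     shuffle_deriv I x y \<longrightarrow> shuffle_deriv I y z \<longrightarrow> shuffle_deriv I x z) \<and>
     (\<forall>f::nat \<Rightarrow> 'a list. (\<forall>i. f i \<in> shuffle_lang I) \<longrightarrow> (\<exists>i j. i < j \<and> shuffle_deriv I (f i) (f j)))"
      using r t by (intro conjI)
  qed
  note eq = this
  show ?thesis
  proof
    assume "\<not> wqo_on_set (shuffle_deriv I) (shuffle_lang I)"
    then obtain f :: "nat \<Rightarrow> 'a list" where f: "\<forall>i. f i \<in> shuffle_lang I" "\<not> (\<exists>i j. i < j \<and> shuffle_deriv I (f i) (f j))"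
      using eq by blast
    then have "bad I f" unfolding bad_def by blast
    then show "\<exists>f. bad I f" by blast
  next
    assume "\<exists>f. bad I f"
    then obtain f where f: "bad I f" by blast
    have "\<forall>i. f i \<in> shuffle_lang I" using bad_mem[OF f] by blast
    moreover have "\<not> (\<exists>i j. i < j \<and> shuffle_deriv I (f i) (f j))" using bad_nd[OF f] by blast
    ultimately show "\<not> wqo_on_set (shuffle_deriv I) (shuffle_lang I)" using eq by blast
  qed
qed

lemma core:
  assumes u: "u \<noteq> []" "last u \<noteq> b" and f: "bad {u} f"
  shows "\<exists>g. bad {u @ replicate k b} g"
proof -
  let ?p = "length u"
  have ex: "\<forall>i. \<exists>n. length (f i) = n * ?p \<and>
      shuffle_deriv {u @ replicate k b} [] (f i @ replicate (k*n) b)"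
  proof
    fix i
    have "shuffle_deriv {u} [] (f i)" using bad_mem[OF f, of i] unfolding shuffle_lang_def by simp
    then show "\<exists>n. length (f i) = n * ?p \<and>
      shuffle_deriv {u @ replicate k b} [] (f i @ replicate (k*n) b)" by (rule fwd)
  qed
  from choice[OF ex] obtain N where N0: "\<forall>i. length (f i) = N i * ?p \<and>
      shuffle_deriv {u @ replicate k b} [] (f i @ replicate (k * N i) b)" by blast
  have N: "\<And>i. length (f i) = N i * ?p"
    "\<And>i. shuffle_deriv {u @ replicate k b} [] (f i @ replicate (k * N i) b)"
    using N0 by blast+
  define g where "g i = f i @ replicate (k * N i) b" for i
  have "bad {u @ replicate k b} g"
    unfolding bad_def
  proof (intro conjI allI impI notI)
    fix i show "g i \<in> shuffle_lang {u @ replicate k b}"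
      using N(2) unfolding g_def shuffle_lang_def by simp
  next
    fix i j assume ij: "i < j" and d: "shuffle_deriv {u @ replicate k b} (g i) (g j)"
    obtain t c where tc: "g i = t @ replicate (k*c) b" "length t = c * ?p" "shuffle_deriv {u} t (f j)"
      using deriv_back[OF u d _ g_def N(1)] N(2) unfolding g_def shuffle_lang_def by blast
    have "length (g i) = N i * (?p + k)" using N(1) unfolding g_def by (simp add: algebra_simps)
    moreover have "length (g i) = c * (?p + k)" using tc by (simp add: algebra_simps)
    ultimately have "c = N i" using u(1) by simp
    then have "t = f i" using tc(1,2) N(1)[of i] unfolding g_def by simp
    then show False using tc(3) bad_nd[OF f ij] by simp
  qed
  then show ?thesis by blast
qed

lemma rev_deriv:
  assumes "shuffle_deriv {u} x y" shows "shuffle_deriv {rev u} (rev x) (rev y)"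
  using assms unfolding shuffle_deriv_def
proof (induction rule: rtranclp_induct)
  case base then show ?case by simp
next
  case (step y z)
  then have "shuffle_step {rev u} (rev y) (rev z)"
    unfolding shuffle_step_def using rev_shuffles by blast
  then show ?case using step(3) by (meson rtranclp.rtrancl_into_rtrancl)
qed

lemma rev_bad: "bad {u} f \<Longrightarrow> bad {rev u} (rev \<circ> f)"
proof -
  assume f: "bad {u} f"
  show ?thesis unfolding bad_def
  proof (intro conjI allI impI notI)
    fix i show "(rev \<circ> f) i \<in> shuffle_lang {rev u}"
      using bad_mem[OF f, of i] rev_deriv[of u "[]" "f i"] unfolding shuffle_lang_def by simp
  next
    fix i j :: nat assume "i < j" "shuffle_deriv {rev u} ((rev \<circ> f) i) ((rev \<circ> f) j)"
    then have "shuffle_deriv {u} (f i) (f j)" using rev_deriv[of "rev u" "rev (f i)" "rev (f j)"] by simp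
    then show False using bad_nd[OF f \<open>i < j\<close>] by simp
  qed
qed

lemma nil_bad: "\<not> bad {[]} f"
proof
  assume b: "bad {[]} f"
  have e: "shuffle_deriv {[]} [] w \<Longrightarrow> w = []" for w
    unfolding shuffle_deriv_def
    by (induction rule: rtranclp_induct) (auto simp: shuffle_step_def)
  have "f 0 = []" "f 1 = []" using bad_mem[OF b, of 0] bad_mem[OF b, of 1] e
    unfolding shuffle_lang_def by auto
  moreover have "\<not> shuffle_deriv {[]} (f 0) (f 1)" using bad_nd[OF b, of 0 1] by simp
  ultimately show False unfolding shuffle_deriv_def by simp
qed

theorem lemma8:
  fixes A :: "'a set" and b :: 'a and u :: "'a list"
  assumes "finite A" and "b \<in> A" and "u \<in> lists A"
  shows "(\<not> (u \<noteq> [] \<and> last u = b) \<and>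
          \<not> wqo_on_set (shuffle_deriv {u}) (shuffle_lang {u}) \<longrightarrow>
          (\<forall>k\<ge>1. \<not> wqo_on_set (shuffle_deriv {u @ replicate k b})
                                  (shuffle_lang {u @ replicate k b})))
       \<and> (\<not> (u \<noteq> [] \<and> hd u = b) \<and>
          \<not> wqo_on_set (shuffle_deriv {u}) (shuffle_lang {u}) \<longrightarrow>
          (\<forall>k\<ge>1. \<not> wqo_on_set (shuffle_deriv {replicate k b @ u})
                                  (shuffle_lang {replicate k b @ u})))"
proof (intro conjI impI allI; elim conjE)
  fix k :: nat
  assume h: "\<not> (u \<noteq> [] \<and> last u = b)" and w: "\<not> wqo_on_set (shuffle_deriv {u}) (shuffle_lang {u})"
  obtain f where f: "bad {u} f" using not_wqo_iff[THEN iffD1, OF w] by (elim exE)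
  have u: "u \<noteq> []" using nil_bad f by metis
  then have l: "last u \<noteq> b" using h by simp
  obtain g where "bad {u @ replicate k b} g" using core[OF u l f, of k] by (elim exE)
  then have "\<exists>g. bad {u @ replicate k b} g" by blast
  then show "\<not> wqo_on_set (shuffle_deriv {u @ replicate k b}) (shuffle_lang {u @ replicate k b})"
    by (rule not_wqo_iff[THEN iffD2])
next
  fix k :: nat
  assume h: "\<not> (u \<noteq> [] \<and> hd u = b)" and w: "\<not> wqo_on_set (shuffle_deriv {u}) (shuffle_lang {u})"
  obtain f where f: "bad {u} f" using not_wqo_iff[THEN iffD1, OF w] by (elim exE)
  have u: "u \<noteq> []" using nil_bad f by metis
  have f': "bad {rev u} (rev \<circ> f)" using rev_bad[OF f] .
  have ru: "rev u \<noteq> []" using u by simp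
  have rl: "last (rev u) \<noteq> b" using u h by (simp add: last_rev)
  obtain g where "bad {rev u @ replicate k b} g" using core[OF ru rl f', of k] by (elim exE)
  then have "bad {rev (rev u @ replicate k b)} (rev \<circ> g)" by (rule rev_bad)
  then have "bad {replicate k b @ u} (rev \<circ> g)" by simp
  then have "\<exists>g. bad {replicate k b @ u} g" by blast
  then show "\<not> wqo_on_set (shuffle_deriv {replicate k b @ u}) (shuffle_lang {replicate k b @ u})"
    by (rule not_wqo_iff[THEN iffD2])
qed

end
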